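(* If $X\subseteq V$ is such that $D[X]$ is a directed sub-block, then there exists a subsystem state $\psi^A_X$ with $A:X\to\{S,I\}$ belonging to $M_E$.
   Context: $D=(V,A)$ is a directed graph on $V=\{1,\dots,N\}$ with rates $T_{ij}\ge0$, $T_{ij}>0$ iff $(j,i)\in A$, $T_{ii}=0$. A subsystem state is $\psi^A_W$ with $W\subseteq V$ nonempty, $A:W\to\{S,I,R\}$; $S_i,I_i$ are single-node states; for $n\notin W$, $\psi^A_WI_n$ is the state on $W\cup\{n\}$ extending $A$ with $n$ in state $I$; $h^X_k(\psi^A_W)$ changes the state of $k\in W$ to $X$. $\mathrm{IN}(X)$ is the set of nodes from which some member of $X$ is reachable by a directed path; $f_E(X,Y,Z)=1$ iff $\mathrm{IN}(X)\cap\mathrm{IN}(Y)=\emptyset$ in $D-Z$ (else $0$), with the convention $f_E(\{n\},\emptyset,\{k\})=0$. A state $\psi^A_W$, $A:W\to\{S,I\}$, induces: $\psi^A_W$; $h^S_k(\psi^A_W)$ for $k\in W$ with $A_k=I$ and $T_{kn}>0$ for some $n\in W$ with $A_n=I$; and for each $k\in W$, $n\in V\setminus W$ with $T_{kn}>0$: the state $h^S_k(\psi^A_W)I_n$ if $f_E(\{n\},W\setminus\{k\},\{k\})=0$, or the states $h^S_k(\psi^A_W)$, $S_kI_n$, $S_k$ if it equals $1$. $M_E$ is the smallest set of subsystem states containing all $S_i,I_i$ and closed under induced states. $D[X]$ is the subgraph induced on $X$. A graph is biconnected if it has at least three vertices, is connected, and remains connected after deleting any single vertex. $D[X]$ is a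 directed sub-block if some node of $X$ is reachable by a directed path within $D[X]$ from every other node of $X$ and the underlying undirected graph of $D[X]$ is biconnected. *)

theory Defs
  imports Complex_Main
begin

(* Directed graph D = (V,A) on V = {1..N}, given by rates T :: nat => nat => real,
   with an arc (j,i) in A iff T i j > 0.  *)

datatype status = S | I | R

(* A subsystem state psi^A_W is a partial map with domain W (nonempty, W \<subseteq> V). *)
type_synonym sstate = "nat \<Rightarrow> status option"

definition Vset :: "nat \<Rightarrow> nat set" where
  "Vset N = {1..N}"

definition arc :: "(nat \<Rightarrow> nat \<Rightarrow> real) \<Rightarrow> nat \<Rightarrow> nat \<Rightarrow> bool" where
  "arc T j i \<longleftrightarrow> T i j > 0"

definition arcs_del :: "nat \<Rightarrow> (nat \<Rightarrow> nat \<Rightarrow> real) \<Rightarrow> nat set \<Rightarrow> (nat \<times> nat) set" where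
  "arcs_del N T Z = {(j,i). j \<in> Vset N - Z \<and> i \<in> Vset N - Z \<and> arc T j i}"

definition IN_del :: "nat \<Rightarrow> (nat \<Rightarrow> nat \<Rightarrow> real) \<Rightarrow> nat set \<Rightarrow> nat set \<Rightarrow> nat set" where
  "IN_del N T Z X = {u \<in> Vset N - Z. \<exists>x \<in> X - Z. (u, x) \<in> (arcs_del N T Z)\<^sup>*}"

definition fE :: "nat \<Rightarrow> (nat \<Rightarrow> nat \<Rightarrow> real) \<Rightarrow> nat set \<Rightarrow> nat set \<Rightarrow> nat set \<Rightarrow> nat" where
  "fE N T X Y Z =
     (if (\<exists>n k. X = {n} \<and> Y = {} \<and> Z = {k}) then 0
      else if IN_del N T Z X \<inter> IN_del N T Z Y = {} then 1 else 0)"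

definition single :: "nat \<Rightarrow> status \<Rightarrow> sstate" where
  "single i x = [i \<mapsto> x]"

definition hset :: "status \<Rightarrow> nat \<Rightarrow> sstate \<Rightarrow> sstate" where
  "hset x k \<psi> = \<psi>(k \<mapsto> x)"

definition addI :: "sstate \<Rightarrow> nat \<Rightarrow> sstate" where
  "addI \<psi> n = \<psi>(n \<mapsto> I)"

definition induced :: "nat \<Rightarrow> (nat \<Rightarrow> nat \<Rightarrow> real) \<Rightarrow> sstate \<Rightarrow> sstate set" where
  "induced N T \<psi> =
     {\<psi>}
     \<union> {hset S k \<psi> | k. k \<in> dom \<psi> \<and> \<psi> k = Some I \<and>
                          (\<exists>n \<in> dom \<psi>. \<psi> n = Some I \<and> T k n > 0)}
     \<union> {addI (hset S k \<psi>) n | k n. k \<in> dom \<psi> \<and> n \<in> Vset N - dom \<psi> \<and> T k n > 0 \<and>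
                          fE N T {n} (dom \<psi> - {k}) {k} = 0}
     \<union> \<Union>{{hset S k \<psi>, addI (single k S) n, single k S} | k n.
                          k \<in> dom \<psi> \<and> n \<in> Vset N - dom \<psi> \<and> T k n > 0 \<and>
                          fE N T {n} (dom \<psi> - {k}) {k} = 1}"

inductive_set ME :: "nat \<Rightarrow> (nat \<Rightarrow> nat \<Rightarrow> real) \<Rightarrow> sstate set"
  for N :: nat and T :: "nat \<Rightarrow> nat \<Rightarrow> real" where
  base_S: "i \<in> Vset N \<Longrightarrow> single i S \<in> ME N T"
| base_I: "i \<in> Vset N \<Longrightarrow> single i I \<in> ME N T"
| step: "\<psi> \<in> ME N T \<Longrightarrow> ran \<psi> \<subseteq> {S, I} \<Longrightarrow> \<phi> \<in> induced N T \<psi> \<Longrightarrow> \<phi> \<in> ME N T"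

definition arcs_in :: "(nat \<Rightarrow> nat \<Rightarrow> real) \<Rightarrow> nat set \<Rightarrow> (nat \<times> nat) set" where
  "arcs_in T X = {(j,i). j \<in> X \<and> i \<in> X \<and> arc T j i}"

definition uedges_in :: "(nat \<Rightarrow> nat \<Rightarrow> real) \<Rightarrow> nat set \<Rightarrow> (nat \<times> nat) set" where
  "uedges_in T X = {(u,v). u \<in> X \<and> v \<in> X \<and> (arc T u v \<or> arc T v u)}"

definition uconnected :: "(nat \<Rightarrow> nat \<Rightarrow> real) \<Rightarrow> nat set \<Rightarrow> bool" where
  "uconnected T X \<longleftrightarrow> (\<forall>u \<in> X. \<forall>v \<in> X. (u, v) \<in> (uedges_in T X)\<^sup>*)"

definition biconnected_under :: "(nat \<Rightarrow> nat \<Rightarrow> real) \<Rightarrow> nat set \<Rightarrow> bool" where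
  "biconnected_under T X \<longleftrightarrow>
     finite X \<and> card X \<ge> 3 \<and> uconnected T X \<and> (\<forall>x \<in> X. uconnected T (X - {x}))"

definition directed_sub_block :: "(nat \<Rightarrow> nat \<Rightarrow> real) \<Rightarrow> nat set \<Rightarrow> bool" where
  "directed_sub_block T X \<longleftrightarrow>
     (\<exists>r \<in> X. \<forall>u \<in> X. (u, r) \<in> (arcs_in T X)\<^sup>*) \<and> biconnected_under T X"

end

theory Submission
  imports Defs
begin

lemma rtr_arcs_in_mono: "Y \<subseteq> Z \<Longrightarrow> (x,y) \<in> (arcs_in T Y)\<^sup>* \<Longrightarrow> (x,y) \<in> (arcs_in T Z)\<^sup>*"
proof -
  assume a: "Y \<subseteq> Z" "(x,y) \<in> (arcs_in T Y)\<^sup>*"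
  have "arcs_in T Y \<subseteq> arcs_in T Z" using a(1) by (auto simp: arcs_in_def)
  then show ?thesis using a(2) rtrancl_mono by blast
qed

lemma rtr_arcs_in_del: "Y \<subseteq> Vset N - Z \<Longrightarrow> (x,y) \<in> (arcs_in T Y)\<^sup>* \<Longrightarrow> (x,y) \<in> (arcs_del N T Z)\<^sup>*"
proof -
  assume a: "Y \<subseteq> Vset N - Z" "(x,y) \<in> (arcs_in T Y)\<^sup>*"
  have "arcs_in T Y \<subseteq> arcs_del N T Z" using a(1) by (auto simp: arcs_in_def arcs_del_def)
  then show ?thesis using a(2) rtrancl_mono by blast
qed

lemma rtr_start: "(x,y) \<in> (arcs_in T Y)\<^sup>* \<Longrightarrow> x = y \<or> x \<in> Y"
  by (erule converse_rtranclE) (auto simp: arcs_in_def)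

lemma first_hit:
  assumes "(u, r) \<in> (arcs_in T X)\<^sup>*" "r \<in> W"
  shows "\<exists>w\<in>W. (u, w) \<in> (arcs_in T ((X - W) \<union> {w}))\<^sup>*"
  using assms(1)
proof (induction rule: converse_rtrancl_induct)
  case base
  then show ?case using assms(2) by blast
next
  case (step u v)
  then obtain w where w: "w \<in> W" "(v, w) \<in> (arcs_in T ((X - W) \<union> {w}))\<^sup>*" by blast
  show ?case
  proof (cases "u \<in> W")
    case True
    then show ?thesis by blast
  next
    case False
    have "v = w \<or> v \<in> (X - W) \<union> {w}" using rtr_start[OF w(2)] .
    then have "v \<in> (X - W) \<union> {w}" by blast
    moreover have "u \<in> X - W" using False step(1) by (auto simp: arcs_in_def)
    ultimately have "(u,v) \<in> arcs_in T ((X - W) \<union> {w})"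
      using step(1) by (auto simp: arcs_in_def)
    then show ?thesis using w by (meson converse_rtrancl_into_rtrancl)
  qed
qed

lemma last_step:
  assumes "(u,k) \<in> (arcs_in T Y)\<^sup>*" "u \<noteq> k"
  shows "\<exists>n. (u,n) \<in> (arcs_in T (Y - {k}))\<^sup>* \<and> (n,k) \<in> arcs_in T Y \<and> n \<noteq> k"
  using assms
proof (induction rule: converse_rtrancl_induct)
  case base
  then show ?case by simp
next
  case (step u v)
  show ?case
  proof (cases "v = k")
    case True
    then show ?thesis using step by auto
  next
    case False
    then obtain n where n: "(v,n) \<in> (arcs_in T (Y - {k}))\<^sup>*" "(n,k) \<in> arcs_in T Y" "n \<noteq> k"
      using step by blast
    have "(u,v) \<in> arcs_in T (Y - {k})" using step(1) step(4) False by (auto simp: arcs_in_def)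
    then show ?thesis using n by (meson converse_rtrancl_into_rtrancl)
  qed
qed

lemma crossing: "(x,y) \<in> E\<^sup>* \<Longrightarrow> x \<in> P \<Longrightarrow> y \<notin> P \<Longrightarrow> \<exists>a b. (a,b) \<in> E \<and> a \<in> P \<and> b \<notin> P"
  by (induction rule: rtrancl_induct) blast+

lemma fE_conv: "fE N T {n} {} {k} = 0"
  by (simp add: fE_def)

lemma fE_zero:
  assumes "c \<in> Vset N - {k}" "(c,n) \<in> (arcs_del N T {k})\<^sup>*" "n \<noteq> k"
    "w \<in> W - {k}" "(c,w) \<in> (arcs_del N T {k})\<^sup>*"
  shows "fE N T {n} (W - {k}) {k} = 0"
proof -
  have "c \<in> IN_del N T {k} {n}" using assms unfolding IN_del_def by blast
  moreover have "c \<in> IN_del N T {k} (W - {k})" using assms unfolding IN_del_def by blast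
  ultimately show ?thesis unfolding fE_def by auto
qed


lemma extension:
  assumes diag: "\<forall>i. T i i = 0"
    and XV: "X \<subseteq> Vset N"
    and rW: "r \<in> W" and WX: "W \<subseteq> X" and neq: "W \<noteq> X"
    and root: "\<forall>u\<in>X. (u, r) \<in> (arcs_in T X)\<^sup>*"
    and conn: "\<forall>x\<in>X. uconnected T (X - {x})"
  shows "\<exists>n k. n \<in> X - W \<and> k \<in> W \<and> T k n > 0 \<and> fE N T {n} (W - {k}) {k} = 0"
proof -
  have ne: "X - W \<noteq> {}" using WX neq by auto
  then obtain u0 where u0: "u0 \<in> X - W" by blast
  have u0r: "(u0, r) \<in> (arcs_in T X)\<^sup>*" using root u0 by blast
  obtain k where k: "k \<in> W" "(u0, k) \<in> (arcs_in T ((X - W) \<union> {k}))\<^sup>*"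
    using first_hit[OF u0r rW] by blast
  define Yk where "Yk = (X - W) \<union> {k}"
  have YkX: "Yk - {k} = X - W" using k(1) unfolding Yk_def by blast
  define Sk where "Sk = {u \<in> X - W. (u, k) \<in> (arcs_in T Yk)\<^sup>*}"
  have u0S: "u0 \<in> Sk" using u0 k unfolding Sk_def Yk_def by blast
  have lastS: "\<exists>n. (u,n) \<in> (arcs_in T (X - W))\<^sup>* \<and> n \<in> X - W \<and> T k n > 0" if "u \<in> Sk" for u
  proof -
    have uk: "u \<noteq> k" using that k(1) unfolding Sk_def by blast
    have ur: "(u,k) \<in> (arcs_in T Yk)\<^sup>*" using that unfolding Sk_def by blast
    obtain n where n: "(u,n) \<in> (arcs_in T (Yk - {k}))\<^sup>*" "(n,k) \<in> arcs_in T Yk" "n \<noteq> k"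
      using last_step[OF ur uk] by blast
    have "n \<in> X - W" using n(2,3) unfolding Yk_def arcs_in_def by blast
    moreover have "T k n > 0" using n(2) unfolding arcs_in_def arc_def by blast
    ultimately show ?thesis using n(1) YkX by auto
  qed
  have kX: "k \<in> X" using k(1) WX by blast
  have del1: "X - W \<subseteq> Vset N - {k}" using XV k(1) by blast
  have del2: "X - {k} \<subseteq> Vset N - {k}" using XV by blast
  show ?thesis
  proof (cases "W - {k} = {}")
    case True
    obtain n where "n \<in> X - W" "T k n > 0" using lastS[OF u0S] by blast
    moreover have "fE N T {n} (W - {k}) {k} = 0" unfolding True by (rule fE_conv)
    ultimately show ?thesis using k(1) by blast
  next
    case False
    then obtain w0 where w0: "w0 \<in> W - {k}" by blast
    show ?thesis
    proof (cases "\<exists>u\<in>Sk. \<exists>w\<in>W - {k}. (u, w) \<in> (arcs_in T (X - {k}))\<^sup>*")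
      case True
      then obtain u w where uw: "u \<in> Sk" "w \<in> W - {k}" "(u, w) \<in> (arcs_in T (X - {k}))\<^sup>*" by blast
      obtain n where n: "(u,n) \<in> (arcs_in T (X - W))\<^sup>*" "n \<in> X - W" "T k n > 0"
        using lastS[OF uw(1)] by blast
      have "fE N T {n} (W - {k}) {k} = 0"
      proof (rule fE_zero[of u])
        show "u \<in> Vset N - {k}" using uw(1) del1 unfolding Sk_def by blast
        show "(u, n) \<in> (arcs_del N T {k})\<^sup>*" using rtr_arcs_in_del[OF del1 n(1)] .
        show "n \<noteq> k" using n(2) k(1) by blast
        show "w \<in> W - {k}" by fact
        show "(u, w) \<in> (arcs_del N T {k})\<^sup>*" using rtr_arcs_in_del[OF del2 uw(3)] .
      qed
      then show ?thesis using n k(1) by blast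
    next
      case False
      note noreach = False
      have uc: "uconnected T (X - {k})" using conn kX by blast
      have u0k: "u0 \<in> X - {k}" using u0 k(1) by blast
      have w0k: "w0 \<in> X - {k}" using w0 WX by blast
      have path: "(u0, w0) \<in> (uedges_in T (X - {k}))\<^sup>*"
        using uc u0k w0k unfolding uconnected_def by blast
      have w0S: "w0 \<notin> Sk" using w0 unfolding Sk_def by blast
      obtain a b where ab: "(a,b) \<in> uedges_in T (X - {k})" "a \<in> Sk" "b \<notin> Sk"
        using crossing[OF path u0S w0S] by blast
      have aX: "a \<in> X - W" using ab(2) unfolding Sk_def by blast
      have bX: "b \<in> X - {k}" using ab(1) unfolding uedges_in_def by blast
      have a_reach: "(a, k) \<in> (arcs_in T Yk)\<^sup>*" using ab(2) unfolding Sk_def by blast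
      show ?thesis
      proof (cases "b \<in> W")
        case bW: True
        show ?thesis
        proof (cases "arc T a b")
          case True
          have "(a, b) \<in> (arcs_in T (X - {k}))\<^sup>*"
            using True aX bX k(1) unfolding arcs_in_def by blast
          then show ?thesis using noreach ab(2) bW bX by blast
        next
          case False
          then have ba: "arc T b a" using ab(1) unfolding uedges_in_def by blast
          obtain n where n: "(a,n) \<in> (arcs_in T (X - W))\<^sup>*" "n \<in> X - W" "T k n > 0"
            using lastS[OF ab(2)] by blast
          have "fE N T {n} (W - {k}) {k} = 0"
          proof (rule fE_zero[of b])
            show "b \<in> Vset N - {k}" using bX XV by blast
            have "(b, a) \<in> arcs_del N T {k}" using ba bX aX XV k(1)
              unfolding arcs_del_def by blast
            then show "(b, n) \<in> (arcs_del N T {k})\<^sup>*"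
              using rtr_arcs_in_del[OF del1 n(1)] by (meson converse_rtrancl_into_rtrancl)
            show "n \<noteq> k" using n(2) k(1) by blast
            show "b \<in> W - {k}" using bW bX by blast
            show "(b, b) \<in> (arcs_del N T {k})\<^sup>*" by simp
          qed
          then show ?thesis using n k(1) by blast
        qed
      next
        case bU: False
        then have bXW: "b \<in> X - W" using bX by blast
        show ?thesis
        proof (cases "arc T b a")
          case True
          have "(b, a) \<in> arcs_in T Yk" using True aX bXW unfolding arcs_in_def Yk_def by blast
          then have "(b, k) \<in> (arcs_in T Yk)\<^sup>*" using a_reach by (meson converse_rtrancl_into_rtrancl)
          then have "b \<in> Sk" using bXW unfolding Sk_def by blast
          then show ?thesis using ab(3) by blast
        next
          case False
          then have abarc: "arc T a b" using ab(1) unfolding uedges_in_def by blast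
          have br: "(b, r) \<in> (arcs_in T X)\<^sup>*" using root bXW by blast
          obtain w where w: "w \<in> W" "(b, w) \<in> (arcs_in T ((X - W) \<union> {w}))\<^sup>*"
            using first_hit[OF br rW] by blast
          show ?thesis
          proof (cases "w = k")
            case True
            then have "b \<in> Sk" using w bXW unfolding Sk_def Yk_def by blast
            then show ?thesis using ab(3) by blast
          next
            case False
            have "(X - W) \<union> {w} \<subseteq> X - {k}" using False w(1) WX k(1) by blast
            then have "(b, w) \<in> (arcs_in T (X - {k}))\<^sup>*" using rtr_arcs_in_mono w(2) by blast
            moreover have "(a, b) \<in> arcs_in T (X - {k})"
              using abarc aX bX k(1) unfolding arcs_in_def by blast
            ultimately have "(a, w) \<in> (arcs_in T (X - {k}))\<^sup>*"
              by (meson converse_rtrancl_into_rtrancl)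
            then show ?thesis using noreach ab(2) w(1) False by blast
          qed
        qed
      qed
    qed
  qed
qed

theorem mainTheorem9:
  fixes N :: nat and T :: "nat \<Rightarrow> nat \<Rightarrow> real" and X :: "nat set"
  assumes nonneg: "\<forall>i j. T i j \<ge> 0"
    and diag: "\<forall>i. T i i = 0"
    and supp: "\<forall>i j. T i j > 0 \<longrightarrow> i \<in> Vset N \<and> j \<in> Vset N"
    and XV: "X \<subseteq> Vset N"
    and blk: "directed_sub_block T X"
  shows "\<exists>\<psi> :: sstate. dom \<psi> = X \<and> ran \<psi> \<subseteq> {S, I} \<and> \<psi> \<in> ME N T"
proof -
  obtain r where rX: "r \<in> X" and root: "\<forall>u\<in>X. (u, r) \<in> (arcs_in T X)\<^sup>*"
    using blk unfolding directed_sub_block_def by blast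
  have finX: "finite X" and conn: "\<forall>x\<in>X. uconnected T (X - {x})"
    using blk unfolding directed_sub_block_def biconnected_under_def by auto
  have main: "\<And>W. card (X - W) = m \<Longrightarrow> r \<in> W \<Longrightarrow> W \<subseteq> X \<Longrightarrow>
      (\<exists>\<psi> :: sstate. dom \<psi> = W \<and> ran \<psi> \<subseteq> {S, I} \<and> \<psi> \<in> ME N T) \<Longrightarrow>
      (\<exists>\<psi> :: sstate. dom \<psi> = X \<and> ran \<psi> \<subseteq> {S, I} \<and> \<psi> \<in> ME N T)" for m
  proof (induction m rule: less_induct)
    case (less m W)
    show ?case
    proof (cases "W = X")
      case True
      then show ?thesis using less.prems by blast
    next
      case False
      obtain n k where nk: "n \<in> X - W" "k \<in> W" "T k n > 0" "fE N T {n} (W - {k}) {k} = 0"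
        using extension[OF diag XV less.prems(2,3) False root conn] by blast
      obtain \<psi> where \<psi>: "dom \<psi> = W" "ran \<psi> \<subseteq> {S, I}" "\<psi> \<in> ME N T" using less.prems(4) by blast
      define \<phi> where "\<phi> = addI (hset S k \<psi>) n"
      have c: "k \<in> dom \<psi>" "n \<in> Vset N - dom \<psi>" "T k n > 0" "fE N T {n} (dom \<psi> - {k}) {k} = 0"
        using nk \<psi>(1) XV by auto
      have "\<phi> \<in> {addI (hset S k \<psi>) n | k n. k \<in> dom \<psi> \<and> n \<in> Vset N - dom \<psi> \<and> T k n > 0 \<and>
                          fE N T {n} (dom \<psi> - {k}) {k} = 0}"
        unfolding \<phi>_def using c by blast
      then have "\<phi> \<in> induced N T \<psi>"
        unfolding induced_def by (intro UnI1 UnI2)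
      then have phiME: "\<phi> \<in> ME N T" using ME.step \<psi>(2,3) by blast
      have domphi: "dom \<phi> = insert n W" using \<psi>(1) nk(2) unfolding \<phi>_def addI_def hset_def by auto
      have "ran \<phi> \<subseteq> ran \<psi> \<union> {S, I}" unfolding \<phi>_def addI_def hset_def
        by (auto simp: ran_def)
      then have ranphi: "ran \<phi> \<subseteq> {S, I}" using \<psi>(2) by blast
      have "card (X - insert n W) < m"
      proof -
        have "X - insert n W \<subset> X - W" using nk(1) by blast
        then show ?thesis using less.prems(1) finX by (metis finite_Diff psubset_card_mono)
      qed
      moreover have "r \<in> insert n W" using less.prems(2) by blast
      moreover have "insert n W \<subseteq> X" using less.prems(3) nk(1) by blast
      moreover have "\<exists>\<psi> :: sstate. dom \<psi> = insert n W \<and> ran \<psi> \<subseteq> {S, I} \<and> \<psi> \<in> ME N T"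
        using domphi ranphi phiME by blast
      ultimately show ?thesis using less.IH by blast
    qed
  qed
  have d1: "dom (single r S) = {r}" by (simp add: single_def)
  have d2: "ran (single r S) \<subseteq> {S, I}" by (simp add: single_def)
  have d3: "single r S \<in> ME N T" using ME.base_S rX XV by blast
  have "{r} \<subseteq> X" using rX by blast
  then show ?thesis using main[OF refl, of "{r}"] d1 d2 d3 by blast
qed

end
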